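(* Let $q=4$ and let $k>0$ be an even integer, and put $e=3k$. Then the polynomial $$g=S_{k+1}^2+S_{2k}^{q^k+1}\in\mathbb{F}_2[x]$$ is a permutation polynomial of $\mathbb{F}_{q^e}=\mathbb{F}_{4^{3k}}$.
   Context: For a prime power $q$, $\mathbb{F}_q$ denotes the finite field with $q$ elements, and $p=\operatorname{char}\mathbb{F}_q$. For a positive integer $m$, $S_m=S_{m,q}=x+x^q+x^{q^2}+\cdots+x^{q^{m-1}}\in\mathbb{F}_p[x]$ (with $q$ fixed, written $S_m$). Powers such as $S_m^2$, $S_m^{q^k+1}$ denote powers of the polynomial $S_m$. A polynomial $f\in\mathbb{F}_Q[x]$ is a permutation polynomial (PP) of $\mathbb{F}_Q$ if the map $c\mapsto f(c)$ is a bijection of $\mathbb{F}_Q$. *)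

theory Defs
  imports "HOL-Computational_Algebra.Polynomial"
begin

definition S_poly :: "nat \<Rightarrow> nat \<Rightarrow> 'a::comm_ring_1 poly" where
  "S_poly q m = (\<Sum>i<m. monom 1 (q ^ i))"

definition permutation_polynomial :: "'a::{field,finite} poly \<Rightarrow> bool" where
  "permutation_polynomial f \<longleftrightarrow> bij (poly f)"

end

theory Submission imports Defs begin

lemma sum_split_add: "(\<Sum>i<m+n. f i) = (\<Sum>i<m. f i) + (\<Sum>i<n. f (m+i))"
  for f :: "nat \<Rightarrow> 'b::comm_monoid_add"
  by (induction n) (simp_all add: add.assoc)

lemma card_char2:
  fixes N :: nat
  assumes "card (UNIV :: 'a::{field,finite} set) = 2 ^ N" "N > 0"
  shows "(2::'a) = 0"
proof -
  have bij: "bij (\<lambda>y::'a. y + 1)"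
    by (rule bij_betw_byWitness[where f'="\<lambda>y. y - 1"]) auto
  have "(\<Sum>y\<in>UNIV. y + (1::'a)) = (\<Sum>y\<in>UNIV. y)"
    using sum.reindex[of "\<lambda>y::'a. y + 1" UNIV "\<lambda>y. y"] bij
    by (simp add: bij_def)
  moreover have "(\<Sum>y\<in>UNIV. y + (1::'a)) = (\<Sum>y\<in>UNIV. y) + of_nat (card (UNIV::'a set))"
    by (simp add: sum.distrib)
  ultimately have "of_nat (card (UNIV::'a set)) = (0::'a)" by simp
  then have "(2::'a) ^ N = 0" using assms(1) by simp
  then show ?thesis using assms(2) by simp
qed

lemma fermat_card:
  fixes x :: "'a::{field,finite}"
  shows "x ^ card (UNIV :: 'a set) = x"
proof (cases "x = 0")
  case True
  then show ?thesis by (simp add: power_0_left)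
next
  case False
  let ?U = "UNIV - {0::'a}"
  have fin: "finite ?U" by simp
  have bij: "bij_betw (\<lambda>y. x * y) ?U ?U"
    by (rule bij_betw_byWitness[where f'="\<lambda>y. y / x"]) (use False in auto)
  have "(\<Prod>y\<in>?U. x * y) = (\<Prod>y\<in>?U. y)"
    using prod.reindex_bij_betw[OF bij, of "\<lambda>y. y"] by simp
  moreover have "(\<Prod>y\<in>?U. x * y) = x ^ card ?U * (\<Prod>y\<in>?U. y)"
    by (simp add: prod.distrib)
  moreover have "(\<Prod>y\<in>?U. y) \<noteq> 0" by (simp add: prod_zero_iff)
  ultimately have "x ^ card ?U = 1" by simp
  moreover have "card (UNIV::'a set) = Suc (card ?U)"
  proof -
    have "card ?U = card (UNIV::'a set) - 1" by (simp add: card_Diff_singleton)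
    moreover have "card (UNIV::'a set) > 0" by (simp add: card_gt_0_iff)
    ultimately show ?thesis by simp
  qed
  ultimately show ?thesis by (metis power_Suc mult.right_neutral)
qed

lemma c2_add_self: assumes "(2::'a::field) = 0" shows "x + x = (0::'a)"
proof -
  have "x + x = 2 * x" by simp
  then show ?thesis using assms by simp
qed

lemma c2_neg: assumes "(2::'a::field) = 0" shows "- x = (x::'a)"
  using c2_add_self[OF assms, of x] by (simp add: add_eq_0_iff)

lemma c2_sq: assumes "(2::'a::field) = 0" shows "(x + y)^2 = x^2 + (y::'a)^2"
proof -
  have "(x + y)^2 = x^2 + y^2 + 2 * (x*y)" by (simp add: power2_eq_square algebra_simps)
  then show ?thesis using assms by simp
qed

lemma c2_pow4: assumes "(2::'a::field) = 0" shows "(x + y)^(4^j) = x^(4^j) + (y::'a)^(4^j)"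
proof (induction j)
  case 0 then show ?case by simp
next
  case (Suc j)
  have e: "\<And>z::'a. z ^ (4 ^ Suc j) = ((z ^ (4^j))^2)^2"
    by (simp add: power_mult[symmetric] mult_ac)
  show ?case unfolding e Suc c2_sq[OF assms] ..
qed

lemma c2_pow4_sum: assumes "(2::'a::field) = 0"
  shows "(\<Sum>i\<in>A. f i)^(4^j) = (\<Sum>i\<in>A. (f i :: 'a)^(4^j))"
proof (cases "finite A")
  case True
  then show ?thesis by (induction A rule: finite_induct) (simp_all add: c2_pow4[OF assms])
next
  case False then show ?thesis by simp
qed

lemma c2_pow4_inj: assumes "(2::'a::field) = 0" and "x^(4^j) = (y::'a)^(4^j)" shows "x = y"
proof -
  have "(x + y)^(4^j) = 0" using c2_pow4[OF assms(1)] assms(2) c2_add_self[OF assms(1)] by simp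
  then have "x + y = 0" by simp
  then show ?thesis using c2_neg[OF assms(1)] by (metis add_eq_0_iff)
qed

theorem theorem2p1:
  fixes k :: nat
  assumes "k > 0" and "even k"
    and "card (UNIV :: 'a::{field,finite} set) = 4 ^ (3 * k)"
  shows "permutation_polynomial
           ((S_poly 4 (k + 1)) ^ 2 + (S_poly 4 (2 * k)) ^ (4 ^ k + 1) :: 'a poly)"
proof -
  have c2: "(2::'a) = 0"
  proof (rule card_char2)
    show "card (UNIV::'a set) = 2 ^ (6*k)" using assms(3) by (simp add: power_mult)
    show "6 * k > 0" using assms(1) by simp
  qed
  define fr :: "nat \<Rightarrow> 'a \<Rightarrow> 'a" where "fr j x = x ^ (4 ^ j)" for j x
  have fr_add: "fr j (x + y) = fr j x + fr j y" for j x y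
    unfolding fr_def by (rule c2_pow4[OF c2])
  have fr_mult: "fr j (x * y) = fr j x * fr j y" for j x y
    unfolding fr_def by (simp add: power_mult_distrib)
  have fr_sq: "fr j (x^2) = (fr j x)^2" for j x
    unfolding fr_def by (simp add: power_mult[symmetric] mult.commute)
  have fr_comp: "fr i (fr j x) = fr (i + j) x" for i j x
    unfolding fr_def by (simp add: power_mult[symmetric] power_add mult.commute)
  have fr_sum: "fr j (\<Sum>i\<in>A. f i) = (\<Sum>i\<in>A. fr j (f i))" for j A f
    unfolding fr_def by (rule c2_pow4_sum[OF c2])
  have fr_inj: "fr j x = fr j y \<Longrightarrow> x = y" for j x y
    unfolding fr_def by (rule c2_pow4_inj[OF c2])
  have fr0: "fr 0 x = x" for x unfolding fr_def by simp
  have fr_zero: "fr j 0 = 0" for j unfolding fr_def by simp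
  have fr3: "fr k (fr k (fr k x)) = x" for x
  proof -
    have e3: "k + (k + k) = 3*k" by simp
    have "fr k (fr k (fr k x)) = fr (3*k) x" by (simp only: fr_comp e3)
    also have "\<dots> = x" unfolding fr_def using fermat_card[of x] assms(3) by simp
    finally show ?thesis .
  qed
  have fr_swap: "fr i (fr j x) = fr j (fr i x)" for i j x
    by (simp add: fr_comp add.commute)
  have addself: "z + z = 0" for z :: 'a by (rule c2_add_self[OF c2])
  have negself: "- z = z" for z :: 'a by (rule c2_neg[OF c2])
  have sqd: "(x + y)^2 = x^2 + y^2" for x y :: 'a by (rule c2_sq[OF c2])
  define T where "T x = (\<Sum>i<k. fr i x)" for x
  have polyS: "poly (S_poly 4 m) x = (\<Sum>i<m. fr i x)" for m x
    unfolding S_poly_def fr_def by (simp add: poly_sum poly_monom)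
  have S2k: "(\<Sum>i<2*k. fr i x) = T x + fr k (T x)" for x
  proof -
    have "(\<Sum>i<2*k. fr i x) = (\<Sum>i<k+k. fr i x)" by (simp add: mult_2)
    also have "\<dots> = T x + (\<Sum>i<k. fr (k+i) x)" unfolding T_def by (rule sum_split_add)
    also have "(\<Sum>i<k. fr (k+i) x) = fr k (T x)" unfolding T_def fr_sum fr_comp ..
    finally show ?thesis .
  qed
  have Sk1: "(\<Sum>i<k+1. fr i x) = T x + fr k x" for x
    unfolding T_def by simp
  have T_add: "T (x + y) = T x + T y" for x y
    unfolding T_def fr_add by (simp add: sum.distrib)
  have T_fr: "fr 1 (T x) = T x + x + fr k x" for x
  proof -
    have "fr 1 (T x) = (\<Sum>i<k. fr (Suc i) x)" unfolding T_def fr_sum fr_comp by simp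
    moreover have "(\<Sum>i<Suc k. fr i x) = fr 0 x + (\<Sum>i<k. fr (Suc i) x)"
      by (rule sum.lessThan_Suc_shift)
    moreover have "(\<Sum>i<Suc k. fr i x) = T x + fr k x" unfolding T_def by simp
    ultimately have "fr 1 (T x) = T x + fr k x - x" by (simp add: fr0 algebra_simps)
    then have "fr 1 (T x) = T x + fr k x + (- x)" by (simp only: diff_conv_add_uminus)
    then show ?thesis unfolding negself by (simp add: ac_simps)
  qed
  define G where "G x = (T x + fr k x)^2 + (T x + fr k (T x)) * fr k (T x + fr k (T x))" for x
  have polyG: "poly ((S_poly 4 (k + 1)) ^ 2 + (S_poly 4 (2 * k)) ^ (4 ^ k + 1) :: 'a poly) x = G x" for x
  proof -
    have "poly ((S_poly 4 (k + 1)) ^ 2 + (S_poly 4 (2 * k)) ^ (4 ^ k + 1) :: 'a poly) x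
       = (T x + fr k x)^2 + (T x + fr k (T x))^(4^k+1)"
      by (simp only: poly_add poly_power polyS Sk1 S2k)
    also have "(T x + fr k (T x))^(4^k+1) = (T x + fr k (T x)) * fr k (T x + fr k (T x))"
      unfolding fr_def by (simp add: power_add mult.commute)
    finally show ?thesis unfolding G_def .
  qed
  have injG: "inj G"
  proof (rule injI)
    fix x y assume Gxy: "G x = G y"
    define a where "a = x + y"
    have ya: "y = x + a" unfolding a_def using addself[of x] by (simp add: add.assoc[symmetric])
    define s0 where "s0 = T x"
    define t0 where "t0 = T a"
    define s1 where "s1 = fr k s0"
    define s2 where "s2 = fr k s1"
    define t1 where "t1 = fr k t0"
    define t2 where "t2 = fr k t1"
    define xk where "xk = fr k x"
    define ak where "ak = fr k a"
    define a2k where "a2k = fr k ak"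
    have s3: "fr k s2 = s0" unfolding s2_def s1_def by (rule fr3)
    have t3: "fr k t2 = t0" unfolding t2_def t1_def by (rule fr3)
    have a3: "fr k a2k = a" unfolding a2k_def ak_def by (rule fr3)
    have Gx: "G x = (s0 + xk)^2 + (s0 + s1) * (s1 + s2)"
      unfolding G_def s0_def s1_def s2_def xk_def fr_add ..
    have Gy: "G y = (s0 + xk + (t0 + ak))^2 + (s0 + s1 + (t0 + t1)) * (s1 + s2 + (t1 + t2))"
      unfolding G_def ya T_add fr_add s0_def s1_def s2_def xk_def t0_def t1_def t2_def ak_def
      by (simp add: algebra_simps)
    define E where "E = (t0+ak)^2 + (t0+t1)*(t1+t2) + (t0+t1)*(s1+s2) + (s0+s1)*(t1+t2)"
    have "G y = G x + E" unfolding Gx Gy E_def sqd by (simp add: algebra_simps)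
    then have E0: "E = 0" using Gxy by simp
    have "fr k E = (t1+a2k)^2 + (t1+t2)*(t2+t0) + (t1+t2)*(s2+s0) + (s1+s2)*(t2+t0)"
      unfolding E_def by (simp only: fr_add fr_mult fr_sq s3 t3 s1_def[symmetric] s2_def[symmetric]
        t1_def[symmetric] t2_def[symmetric] a2k_def[symmetric])
    moreover have "fr k E = 0" using E0 fr_zero by simp
    ultimately have E1: "(t1+a2k)^2 + (t1+t2)*(t2+t0) + (t1+t2)*(s2+s0) + (s1+s2)*(t2+t0) = 0" by simp
    define R where "R = t0*(t1+t2) + t0*s1+t0*s2+t1*s1+t1*s2+s0*t1+s0*t2+s1*t2+t2*s2"
    have "E + ((t1+a2k)^2 + (t1+t2)*(t2+t0) + (t1+t2)*(s2+s0) + (s1+s2)*(t2+t0))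
        = (t0+ak)^2 + (t1+a2k)^2 + (t1+t2)^2 + 2 * R"
      unfolding E_def R_def by (simp add: algebra_simps power2_eq_square)
    then have "(t0+ak)^2 + (t1+a2k)^2 + (t1+t2)^2 = 0" using E0 E1 c2 by simp
    then have "((t0+ak) + (t1+a2k) + (t1+t2))^2 = 0" unfolding sqd .
    then have "(t0+ak) + (t1+a2k) + (t1+t2) = 0" by simp
    then have X: "t0 + t2 + ak + a2k = 0" using c2 by (simp add: algebra_simps)
    have f1t0: "fr 1 t0 = t0 + a + ak" unfolding t0_def ak_def by (rule T_fr)
    have f1t2: "fr 1 t2 = t2 + a2k + a"
    proof -
      have "fr 1 t2 = fr k (fr k (fr 1 t0))" unfolding t2_def t1_def by (simp add: fr_swap)
      also have "\<dots> = t2 + a2k + a" unfolding f1t0 fr_add t2_def t1_def a2k_def ak_def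
        using a3 unfolding a2k_def ak_def by simp
      finally show ?thesis .
    qed
    have "fr 1 (t0 + t2) = (t0 + t2 + ak + a2k) + (a + a)" unfolding fr_add f1t0 f1t2
      by (simp add: algebra_simps)
    then have "fr 1 (t0 + t2) = fr 1 0" using X addself[of a] by (simp add: fr_def)
    then have "t0 + t2 = 0" by (rule fr_inj)
    then have t20: "t2 = t0" using negself by (metis add_eq_0_iff)
    have t10: "t1 = t0" using t3 t20 unfolding t1_def by simp
    have "E = (t0+ak)^2" unfolding E_def t10 t20 addself by simp
    then have "t0 + ak = 0" using E0 by simp
    then have t0ak: "t0 = ak" using negself by (metis add_eq_0_iff)
    have "ak = a2k" using t10 t0ak unfolding t1_def a2k_def by simp
    then have "fr k a = fr k ak" unfolding a2k_def ak_def by simp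
    then have aak: "a = ak" unfolding ak_def by (rule fr_inj)
    have "fr 1 a = a + a + a" using f1t0 t0ak aak by simp
    then have "fr 1 a = a" unfolding addself by simp
    then have fia: "fr i a = a" for i
    proof (induction i)
      case 0 then show ?case by (simp add: fr0)
    next
      case (Suc i)
      have "fr (Suc i) a = fr 1 (fr i a)" by (simp add: fr_comp)
      then show ?case using Suc by simp
    qed
    obtain m where km: "k = 2 * m" using assms(2) by blast
    have "T a = of_nat k * a" unfolding T_def fia by simp
    also have "\<dots> = 0" using km c2 by simp
    finally have "a = 0" using t0_def t0ak aak by simp
    then show "x = y" unfolding a_def using negself by (metis add_eq_0_iff)
  qed
  show ?thesis unfolding permutation_polynomial_def
  proof -
    have "poly ((S_poly 4 (k + 1)) ^ 2 + (S_poly 4 (2 * k)) ^ (4 ^ k + 1) :: 'a poly) = G"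
      using polyG by auto
    then show "bij (poly ((S_poly 4 (k + 1)) ^ 2 + (S_poly 4 (2 * k)) ^ (4 ^ k + 1) :: 'a poly))"
      using injG finite_UNIV_inj_surj[of G] by (simp add: bij_def)
  qed
qed

end
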